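(* Let $\mathcal E:\mathbb R^d\to\mathbb R$ be continuous and positive with $\underline{\mathcal E}:=\inf_{v\in\mathbb R^d}\mathcal E(v)$ and $\overline{\mathcal E}:=\sup_{v\in\mathbb R^d}\mathcal E(v)$ finite, so that $\underline{\mathcal E}\le \mathcal E(w)\le\overline{\mathcal E}$ for all $w\in\mathbb R^d$. Fix $\beta>0$, $\lambda\ge 0$, $\sigma\ge0$, and put $C_{\beta,\mathcal E}:=e^{\beta(\overline{\mathcal E}-\underline{\mathcal E})}$. Let $f(v,t)$ be a family of probability densities on $\mathbb R^d$ (with finite second moments) solving the Boltzmann-type equation with microscopic best estimate only, described in the context. Then, if $\beta$ is sufficiently large, for all $t>0$ $$V(t)\le V(0)\exp\Big(-\Big(\frac{\lambda}{C_{\beta,\mathcal E}}-\lambda^2-2\sigma^2\kappa\Big)t\Big).$$ In particular, if $\sigma^2<\frac{\lambda}{2\kappa}\big(\frac{1}{C_{\beta,\mathcal E}}-\lambda\big)$, then $V(t)\to0$ as $t\to\infty$.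
   Context: Let $\omega_\beta^{\mathcal E}(v):=e^{-\beta\mathcal E(v)}$ and $\gamma_\beta^{\mathcal E}(v,v_* ):=\frac{\omega_\beta^{\mathcal E}(v_* )}{\omega_\beta^{\mathcal E}(v)+\omega_\beta^{\mathcal E}(v_* )}$, and $v_{\beta,\mathcal E}(v,v_* ):=\frac{\omega_\beta^{\mathcal E}(v)v+\omega_\beta^{\mathcal E}(v_* )v_*}{\omega_\beta^{\mathcal E}(v)+\omega_\beta^{\mathcal E}(v_* )}$, so that $v_{\beta,\mathcal E}(v,v_* )-v=\gamma_\beta^{\mathcal E}(v,v_* )(v_*-v)$. The binary interaction is $v'=v+\lambda\gamma_\beta^{\mathcal E}(v,v_* )(v_*-v)+\sigma D(v,v_* )\xi_1$, where $\xi_1\in\mathbb R^d$ is a random vector of i.i.d. components with zero mean and unit variance, and $D(v,v_* )$ is a $d\times d$ diagonal matrix, either isotropic $D(v,v_* )=\|v_{\beta,\mathcal E}(v,v_* )-v\|_2 I_d$ (then $\kappa:=d$) or anisotropic $D(v,v_* )=\mathrm{diag}\{(v_{\beta,\mathcal E}(v,v_* )-v)_1,\dots,(v_{\beta,\mathcal E}(v,v_* )-v)_d\}$ (then $\kappa:=1$). The density $f$ satisfies, for test functions $\phi$ (including $\phi(v)=v$ and $\phi(v)=|v|^2$), $$\frac{d}{dt}\int_{\mathbb R^d}f(v,t)\phi(v)\,dv=\Big\langle\int_{\mathbb R^{2d}}(\phi(v')-\phi(v))f(v,t)f(v_*,t)\,dv\,dv_*\Big\rangle,$$ where $\langle\cdot\rangle$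 is expectation over the random vector. Here $m(t):=\int v f(v,t)\,dv$ and $V(t):=\frac12\int|v-m(t)|^2f(v,t)\,dv$. *)

theory Defs
  imports "HOL-Probability.Probability"
begin

definition omega_w :: "real \<Rightarrow> ('v \<Rightarrow> real) \<Rightarrow> 'v \<Rightarrow> real" where
  "omega_w \<beta> E v = exp (- \<beta> * E v)"

definition gamma_w :: "real \<Rightarrow> ('v \<Rightarrow> real) \<Rightarrow> 'v \<Rightarrow> 'v \<Rightarrow> real" where
  "gamma_w \<beta> E v w = omega_w \<beta> E w / (omega_w \<beta> E v + omega_w \<beta> E w)"

definition v_best :: "real \<Rightarrow> ('v::real_vector \<Rightarrow> real) \<Rightarrow> 'v \<Rightarrow> 'v \<Rightarrow> 'v" where
  "v_best \<beta> E v w =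
     (1 / (omega_w \<beta> E v + omega_w \<beta> E w)) *\<^sub>R (omega_w \<beta> E v *\<^sub>R v + omega_w \<beta> E w *\<^sub>R w)"

datatype noise = Isotropic | Anisotropic

definition diff_mat :: "noise \<Rightarrow> real \<Rightarrow> (real^'n \<Rightarrow> real) \<Rightarrow> real^'n \<Rightarrow> real^'n \<Rightarrow> real^'n^'n" where
  "diff_mat nt \<beta> E v w =
     (case nt of
        Isotropic \<Rightarrow> mat (norm (v_best \<beta> E v w - v))
      | Anisotropic \<Rightarrow> (\<chi> i j. if i = j then (v_best \<beta> E v w - v) $ i else 0))"

definition kappa :: "noise \<Rightarrow> 'n::finite itself \<Rightarrow> real" where
  "kappa nt _ = (case nt of Isotropic \<Rightarrow> real CARD('n) | Anisotropic \<Rightarrow> 1)"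

definition v_post :: "noise \<Rightarrow> real \<Rightarrow> real \<Rightarrow> real \<Rightarrow> (real^'n \<Rightarrow> real)
      \<Rightarrow> real^'n \<Rightarrow> real^'n \<Rightarrow> real^'n \<Rightarrow> real^'n" where
  "v_post nt \<beta> lam sig E v w xi =
     v + (lam * gamma_w \<beta> E v w) *\<^sub>R (w - v) + sig *\<^sub>R (diff_mat nt \<beta> E v w *v xi)"

definition C_beta :: "real \<Rightarrow> ('v \<Rightarrow> real) \<Rightarrow> real" where
  "C_beta \<beta> E = exp (\<beta> * (Sup (range E) - Inf (range E)))"

definition mean :: "(real^'n \<Rightarrow> real \<Rightarrow> real) \<Rightarrow> real \<Rightarrow> real^'n" where
  "mean f t = (\<integral>v. f v t *\<^sub>R v \<partial>lborel)"

definition Var :: "(real^'n \<Rightarrow> real \<Rightarrow> real) \<Rightarrow> real \<Rightarrow> real" where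
  "Var f t = 1/2 * (\<integral>v. (norm (v - mean f t))\<^sup>2 * f v t \<partial>lborel)"

definition iid_noise :: "'w measure \<Rightarrow> ('w \<Rightarrow> real^'n) \<Rightarrow> bool" where
  "iid_noise P Xi \<longleftrightarrow> prob_space P \<and>
     (\<forall>i. (\<lambda>\<omega>. Xi \<omega> $ i) \<in> borel_measurable P) \<and>
     prob_space.indep_vars P (\<lambda>_. borel) (\<lambda>i \<omega>. Xi \<omega> $ i) UNIV \<and>
     (\<forall>i j. distr P borel (\<lambda>\<omega>. Xi \<omega> $ i) = distr P borel (\<lambda>\<omega>. Xi \<omega> $ j)) \<and>
     (\<forall>i. integrable P (\<lambda>\<omega>. (Xi \<omega> $ i)\<^sup>2)) \<and>
     (\<forall>i. (\<integral>\<omega>. Xi \<omega> $ i \<partial>P) = 0) \<and>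
     (\<forall>i. (\<integral>\<omega>. (Xi \<omega> $ i)\<^sup>2 \<partial>P) = 1)"

definition coll :: "noise \<Rightarrow> real \<Rightarrow> real \<Rightarrow> real \<Rightarrow> (real^'n \<Rightarrow> real) \<Rightarrow> 'w measure
      \<Rightarrow> ('w \<Rightarrow> real^'n) \<Rightarrow> (real^'n \<Rightarrow> real \<Rightarrow> real) \<Rightarrow> (real^'n \<Rightarrow> real) \<Rightarrow> real \<Rightarrow> real" where
  "coll nt \<beta> lam sig E P Xi f phi t =
     (\<integral>\<omega>. (\<integral>v. (\<integral>w. (phi (v_post nt \<beta> lam sig E v w (Xi \<omega>)) - phi v) * f v t * f w t \<partial>lborel) \<partial>lborel) \<partial>P)"

text \<open>f is a family (t \<ge> 0) of probability densities with finite second moments solving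
  the Boltzmann-type equation in weak form for the test functions phi(v) = v
  (i.e. every coordinate v_i) and phi(v) = |v|^2.\<close>
definition boltzmann_solution :: "noise \<Rightarrow> real \<Rightarrow> real \<Rightarrow> real \<Rightarrow> (real^'n \<Rightarrow> real)
      \<Rightarrow> 'w measure \<Rightarrow> ('w \<Rightarrow> real^'n) \<Rightarrow> (real^'n \<Rightarrow> real \<Rightarrow> real) \<Rightarrow> bool" where
  "boltzmann_solution nt \<beta> lam sig E P Xi f \<longleftrightarrow>
     (\<forall>t\<ge>0.
        (\<lambda>v. f v t) \<in> borel_measurable lborel \<and>
        (\<forall>v. 0 \<le> f v t) \<and>
        integrable lborel (\<lambda>v. f v t) \<and>
        (\<integral>v. f v t \<partial>lborel) = 1 \<and>
        integrable lborel (\<lambda>v. (norm v)\<^sup>2 * f v t)) \<and>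
     (\<forall>t\<ge>0. \<forall>i.
        ((\<lambda>s. \<integral>v. v $ i * f v s \<partial>lborel) has_real_derivative
           coll nt \<beta> lam sig E P Xi f (\<lambda>v. v $ i) t) (at t within {0..})) \<and>
     (\<forall>t\<ge>0.
        ((\<lambda>s. \<integral>v. (norm v)\<^sup>2 * f v s \<partial>lborel) has_real_derivative
           coll nt \<beta> lam sig E P Xi f (\<lambda>v. (norm v)\<^sup>2) t) (at t within {0..}))"

end

theory Submission
  imports Defs
begin

definition good :: "(real^'n \<Rightarrow> real^'n \<Rightarrow> real) \<Rightarrow> bool" where
  "good h \<longleftrightarrow> continuous_on UNIV (\<lambda>p. h (fst p) (snd p)) \<and>
     (\<exists>K\<ge>0. \<forall>v w. \<bar>h v w\<bar> \<le> K * (1 + (norm v)\<^sup>2 + (norm w)\<^sup>2))"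

definition lin :: "(real^'n \<Rightarrow> real^'n \<Rightarrow> real) \<Rightarrow> bool" where
  "lin h \<longleftrightarrow> continuous_on UNIV (\<lambda>p. h (fst p) (snd p)) \<and>
     (\<exists>K\<ge>0. \<forall>v w. \<bar>h v w\<bar> \<le> K * (1 + norm v + norm w))"

definition bdd :: "(real^'n \<Rightarrow> real^'n \<Rightarrow> real) \<Rightarrow> bool" where
  "bdd h \<longleftrightarrow> continuous_on UNIV (\<lambda>p. h (fst p) (snd p)) \<and>
     (\<exists>K\<ge>0. \<forall>v w. \<bar>h v w\<bar> \<le> K)"

lemma add_bnd: "\<bar>x\<bar> \<le> K1 * X \<Longrightarrow> \<bar>y\<bar> \<le> K2 * X \<Longrightarrow> \<bar>x + y\<bar> \<le> (K1 + K2) * (X::real)"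
  by (simp add: distrib_right)

lemma good_add: "good a \<Longrightarrow> good b \<Longrightarrow> good (\<lambda>v w. a v w + b v w)"
  unfolding good_def
proof (elim conjE exE, intro conjI)
  fix K1 K2 assume "continuous_on UNIV (\<lambda>p. a (fst p) (snd p))" "continuous_on UNIV (\<lambda>p. b (fst p) (snd p))"
  then show "continuous_on UNIV (\<lambda>p. a (fst p) (snd p) + b (fst p) (snd p))" by (intro continuous_intros)
  assume "K1 \<ge> 0" "\<forall>v w. \<bar>a v w\<bar> \<le> K1 * (1 + (norm v)\<^sup>2 + (norm w)\<^sup>2)"
     "K2 \<ge> 0" "\<forall>v w. \<bar>b v w\<bar> \<le> K2 * (1 + (norm v)\<^sup>2 + (norm w)\<^sup>2)"
  then show "\<exists>K\<ge>0. \<forall>v w. \<bar>a v w + b v w\<bar> \<le> K * (1 + (norm v)\<^sup>2 + (norm w)\<^sup>2)"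
    by (intro exI[of _ "K1+K2"]) (auto intro!: add_bnd)
qed

lemma good_cmult: "good a \<Longrightarrow> good (\<lambda>v w. c * a v w)"
  unfolding good_def
proof (elim conjE exE, intro conjI)
  fix K1 assume "continuous_on UNIV (\<lambda>p. a (fst p) (snd p))"
  then show "continuous_on UNIV (\<lambda>p. c * a (fst p) (snd p))" by (intro continuous_intros)
  assume "K1 \<ge> 0" "\<forall>v w. \<bar>a v w\<bar> \<le> K1 * (1 + (norm v)\<^sup>2 + (norm w)\<^sup>2)"
  then show "\<exists>K\<ge>0. \<forall>v w. \<bar>c * a v w\<bar> \<le> K * (1 + (norm v)\<^sup>2 + (norm w)\<^sup>2)"
    by (intro exI[of _ "\<bar>c\<bar>*K1"]) (auto simp: abs_mult mult.assoc intro!: mult_left_mono)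
qed

lemma good_zero: "good (\<lambda>v w. 0)"
  unfolding good_def by auto

lemma good_sum: "(\<And>i. i \<in> S \<Longrightarrow> good (a i)) \<Longrightarrow> good (\<lambda>v w. \<Sum>i\<in>S. a i v w)"
proof (induction S rule: infinite_finite_induct)
  case (infinite A) then show ?case by (simp add: good_zero)
next
  case empty then show ?case by (simp add: good_zero)
next
  case (insert x F) then show ?case by (simp add: good_add)
qed

lemma sq_bound: "(1 + a + b)\<^sup>2 \<le> 3 * (1 + a\<^sup>2 + b\<^sup>2)" for a b :: real
proof -
  have e: "3 * (1 + a\<^sup>2 + b\<^sup>2) - (1 + a + b)\<^sup>2 = (1-a)\<^sup>2 + (1-b)\<^sup>2 + (a-b)\<^sup>2"
    by (simp add: power2_eq_square algebra_simps)
  have "0 \<le> (1-a)\<^sup>2 + (1-b)\<^sup>2 + (a-b)\<^sup>2" by simp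
  with e show ?thesis by linarith
qed

lemma good_mult_lin: "lin a \<Longrightarrow> lin b \<Longrightarrow> good (\<lambda>v w. a v w * b v w)"
  unfolding good_def lin_def
proof (elim conjE exE, intro conjI)
  fix K1 K2 assume "continuous_on UNIV (\<lambda>p. a (fst p) (snd p))" "continuous_on UNIV (\<lambda>p. b (fst p) (snd p))"
  then show "continuous_on UNIV (\<lambda>p. a (fst p) (snd p) * b (fst p) (snd p))" by (intro continuous_intros)
  assume k: "K1 \<ge> 0" "\<forall>v w. \<bar>a v w\<bar> \<le> K1 * (1 + norm v + norm w)"
     "K2 \<ge> 0" "\<forall>v w. \<bar>b v w\<bar> \<le> K2 * (1 + norm v + norm w)"
  show "\<exists>K\<ge>0. \<forall>v w. \<bar>a v w * b v w\<bar> \<le> K * (1 + (norm v)\<^sup>2 + (norm w)\<^sup>2)"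
  proof (intro exI[of _ "3*K1*K2"] conjI allI)
    show "0 \<le> 3*K1*K2" using k by simp
    fix v w
    have "\<bar>a v w * b v w\<bar> \<le> (K1 * (1 + norm v + norm w)) * (K2 * (1 + norm v + norm w))"
      unfolding abs_mult using k by (intro mult_mono) auto
    also have "\<dots> = K1 * K2 * (1 + norm v + norm w)\<^sup>2" by (simp add: power2_eq_square)
    also have "\<dots> \<le> K1 * K2 * (3 * (1 + (norm v)\<^sup>2 + (norm w)\<^sup>2))"
      using k by (intro mult_left_mono sq_bound) auto
    finally show "\<bar>a v w * b v w\<bar> \<le> 3 * K1 * K2 * (1 + (norm v)\<^sup>2 + (norm w)\<^sup>2)" by (simp add: mult_ac)
  qed
qed

lemma lin_const: "lin (\<lambda>v w. c)"
  unfolding lin_def by (auto intro!: exI[of _ "\<bar>c\<bar>"] simp: algebra_simps)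

lemma bdd_const: "bdd (\<lambda>v w. c)"
  unfolding bdd_def by (auto intro!: exI[of _ "\<bar>c\<bar>"])

lemma lin_imp_good: "lin a \<Longrightarrow> good a"
proof -
  assume "lin a"
  then have "good (\<lambda>v w. a v w * 1)" by (intro good_mult_lin lin_const)
  then show ?thesis by simp
qed

lemma lin_add: "lin a \<Longrightarrow> lin b \<Longrightarrow> lin (\<lambda>v w. a v w + b v w)"
  unfolding lin_def
proof (elim conjE exE, intro conjI)
  fix K1 K2 assume "continuous_on UNIV (\<lambda>p. a (fst p) (snd p))" "continuous_on UNIV (\<lambda>p. b (fst p) (snd p))"
  then show "continuous_on UNIV (\<lambda>p. a (fst p) (snd p) + b (fst p) (snd p))" by (intro continuous_intros)
  assume "K1 \<ge> 0" "\<forall>v w. \<bar>a v w\<bar> \<le> K1 * (1 + norm v + norm w)"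
     "K2 \<ge> 0" "\<forall>v w. \<bar>b v w\<bar> \<le> K2 * (1 + norm v + norm w)"
  then show "\<exists>K\<ge>0. \<forall>v w. \<bar>a v w + b v w\<bar> \<le> K * (1 + norm v + norm w)"
    by (intro exI[of _ "K1+K2"]) (auto intro!: add_bnd)
qed

lemma bdd_mult_lin: "bdd a \<Longrightarrow> lin b \<Longrightarrow> lin (\<lambda>v w. a v w * b v w)"
  unfolding bdd_def lin_def
proof (elim conjE exE, intro conjI)
  fix K1 K2 assume "continuous_on UNIV (\<lambda>p. a (fst p) (snd p))" "continuous_on UNIV (\<lambda>p. b (fst p) (snd p))"
  then show "continuous_on UNIV (\<lambda>p. a (fst p) (snd p) * b (fst p) (snd p))" by (intro continuous_intros)
  assume k: "K1 \<ge> 0" "\<forall>v w. \<bar>a v w\<bar> \<le> K1"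
     "K2 \<ge> 0" "\<forall>v w. \<bar>b v w\<bar> \<le> K2 * (1 + norm v + norm w)"
  then show "\<exists>K\<ge>0. \<forall>v w. \<bar>a v w * b v w\<bar> \<le> K * (1 + norm v + norm w)"
    by (intro exI[of _ "K1*K2"]) (auto simp: abs_mult mult.assoc intro!: mult_mono)
qed

lemma bdd_mult_good: "bdd a \<Longrightarrow> good b \<Longrightarrow> good (\<lambda>v w. a v w * b v w)"
  unfolding bdd_def good_def
proof (elim conjE exE, intro conjI)
  fix K1 K2 assume "continuous_on UNIV (\<lambda>p. a (fst p) (snd p))" "continuous_on UNIV (\<lambda>p. b (fst p) (snd p))"
  then show "continuous_on UNIV (\<lambda>p. a (fst p) (snd p) * b (fst p) (snd p))" by (intro continuous_intros)
  assume k: "K1 \<ge> 0" "\<forall>v w. \<bar>a v w\<bar> \<le> K1"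
     "K2 \<ge> 0" "\<forall>v w. \<bar>b v w\<bar> \<le> K2 * (1 + (norm v)\<^sup>2 + (norm w)\<^sup>2)"
  then show "\<exists>K\<ge>0. \<forall>v w. \<bar>a v w * b v w\<bar> \<le> K * (1 + (norm v)\<^sup>2 + (norm w)\<^sup>2)"
    by (intro exI[of _ "K1*K2"]) (auto simp: abs_mult mult.assoc intro!: mult_mono)
qed

lemma lin_cmult: "lin a \<Longrightarrow> lin (\<lambda>v w. c * a v w)"
  using bdd_mult_lin[OF bdd_const] .

lemma lin_fst: "lin (\<lambda>(v::real^'n) (w::real^'n). v $ i)"
  unfolding lin_def
proof (intro conjI)
  show "continuous_on UNIV (\<lambda>p. fst p $ i :: real)" by (intro continuous_intros)
  show "\<exists>K\<ge>0. \<forall>v w. \<bar>v $ i\<bar> \<le> K * (1 + norm v + norm (w::real^'n))"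
    by (intro exI[of _ 1]) (auto intro: order_trans[OF component_le_norm_cart])
qed

lemma lin_snd: "lin (\<lambda>(v::real^'n) (w::real^'n). w $ i)"
  unfolding lin_def
proof (intro conjI)
  show "continuous_on UNIV (\<lambda>p. snd p $ i :: real)" by (intro continuous_intros)
  show "\<exists>K\<ge>0. \<forall>v (w::real^'n). \<bar>w $ i\<bar> \<le> K * (1 + norm v + norm w)"
    by (intro exI[of _ 1]) (auto intro: order_trans[OF component_le_norm_cart])
qed


lemma good_abs: "good a \<Longrightarrow> good (\<lambda>v w. \<bar>a v w\<bar>)"
  unfolding good_def by (auto intro: continuous_intros)

lemma good_meas2: "good h \<Longrightarrow> (\<lambda>p. h (fst p) (snd p)) \<in> borel_measurable (lborel \<Otimes>\<^sub>M lborel)"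
  unfolding good_def lborel_prod by (auto intro: borel_measurable_continuous_onI)

lemma good_meas1: "good h \<Longrightarrow> (\<lambda>w. h v w) \<in> borel_measurable lborel"
proof -
  assume "good h"
  then have c: "continuous_on UNIV (\<lambda>p. h (fst p) (snd p))" unfolding good_def by auto
  have "continuous_on UNIV (\<lambda>w. (\<lambda>p. h (fst p) (snd p)) (v, w))"
    by (rule continuous_on_compose2[OF c]) (auto intro: continuous_intros)
  then show ?thesis by (auto intro: borel_measurable_continuous_onI)
qed

locale dens =
  fixes g :: "real^'n \<Rightarrow> real"
  assumes gm[measurable]: "g \<in> borel_measurable lborel"
    and gnn: "\<And>v. 0 \<le> g v"
    and gi: "integrable lborel g"
    and g1: "(\<integral>v. g v \<partial>lborel) = 1"
    and g2: "integrable lborel (\<lambda>v. (norm v)\<^sup>2 * g v)"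
begin

definition I :: "(real^'n \<Rightarrow> real^'n \<Rightarrow> real) \<Rightarrow> real" where
  "I h = (\<integral>v. (\<integral>w. h v w * g v * g w \<partial>lborel) \<partial>lborel)"

definition M2 where "M2 = (\<integral>v. (norm v)\<^sup>2 * g v \<partial>lborel)"

lemma M2_nonneg: "M2 \<ge> 0"
  unfolding M2_def using gnn by (auto intro!: integral_nonneg_AE)

lemma inner_int:
  assumes "good h" shows "integrable lborel (\<lambda>w. h v w * g v * g w)"
proof -
  obtain K where K: "K \<ge> 0" "\<And>v w. \<bar>h v w\<bar> \<le> K * (1 + (norm v)\<^sup>2 + (norm w)\<^sup>2)"
    using assms unfolding good_def by auto
  have m[measurable]: "(\<lambda>w. h v w) \<in> borel_measurable lborel" using good_meas1[OF assms] .
  show ?thesis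
  proof (rule Bochner_Integration.integrable_bound[where f="\<lambda>w. K * g v * ((1 + (norm v)\<^sup>2) * g w + (norm w)\<^sup>2 * g w)"])
    show "integrable lborel (\<lambda>w. K * g v * ((1 + (norm v)\<^sup>2) * g w + (norm w)\<^sup>2 * g w))"
      using gi g2 by (intro integrable_mult_right integrable_add) auto
    show "(\<lambda>w. h v w * g v * g w) \<in> borel_measurable lborel" by measurable
    show "AE w in lborel. norm (h v w * g v * g w) \<le> norm (K * g v * ((1 + (norm v)\<^sup>2) * g w + (norm w)\<^sup>2 * g w))"
    proof (intro AE_I2)
      fix w
      have "norm (h v w * g v * g w) = \<bar>h v w\<bar> * (g v * g w)" using gnn by (simp add: abs_mult)
      also have "\<dots> \<le> K * (1 + (norm v)\<^sup>2 + (norm w)\<^sup>2) * (g v * g w)"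
        using K gnn by (intro mult_right_mono) auto
      also have "\<dots> = norm (K * g v * ((1 + (norm v)\<^sup>2) * g w + (norm w)\<^sup>2 * g w))"
        using K gnn by (simp add: algebra_simps)
      finally show "norm (h v w * g v * g w) \<le> norm (K * g v * ((1 + (norm v)\<^sup>2) * g w + (norm w)\<^sup>2 * g w))" .
    qed
  qed
qed

lemma inner_bound:
  assumes "good h"
  obtains K where "K \<ge> 0" "\<And>v. \<bar>\<integral>w. h v w * g v * g w \<partial>lborel\<bar> \<le> K * ((1 + M2) * g v + (norm v)\<^sup>2 * g v)"
proof -
  obtain K where K: "K \<ge> 0" "\<And>v w. \<bar>h v w\<bar> \<le> K * (1 + (norm v)\<^sup>2 + (norm w)\<^sup>2)"
    using assms unfolding good_def by auto
  have "\<bar>\<integral>w. h v w * g v * g w \<partial>lborel\<bar> \<le> K * ((1 + M2) * g v + (norm v)\<^sup>2 * g v)" for v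
  proof -
    have "\<bar>\<integral>w. h v w * g v * g w \<partial>lborel\<bar> \<le> (\<integral>w. K * g v * ((1 + (norm v)\<^sup>2) * g w + (norm w)\<^sup>2 * g w) \<partial>lborel)"
    proof (rule integral_abs_bound_integral)
      show "integrable lborel (\<lambda>w. h v w * g v * g w)" by (rule inner_int[OF assms])
      show "integrable lborel (\<lambda>w. K * g v * ((1 + (norm v)\<^sup>2) * g w + (norm w)\<^sup>2 * g w))"
        using gi g2 by (intro integrable_mult_right integrable_add) auto
      fix w
      have "\<bar>h v w * g v * g w\<bar> = \<bar>h v w\<bar> * (g v * g w)" using gnn by (simp add: abs_mult)
      also have "\<dots> \<le> K * (1 + (norm v)\<^sup>2 + (norm w)\<^sup>2) * (g v * g w)"
        using K gnn by (intro mult_right_mono) auto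
      also have "\<dots> = K * g v * ((1 + (norm v)\<^sup>2) * g w + (norm w)\<^sup>2 * g w)"
        by (simp add: algebra_simps)
      finally show "\<bar>h v w * g v * g w\<bar> \<le> K * g v * ((1 + (norm v)\<^sup>2) * g w + (norm w)\<^sup>2 * g w)" .
    qed
    also have "\<dots> = K * g v * ((1 + (norm v)\<^sup>2) * (\<integral>w. g w \<partial>lborel) + M2)"
      unfolding M2_def using gi g2 by (simp add: integral_add)
    also have "\<dots> = K * ((1 + M2) * g v + (norm v)\<^sup>2 * g v)"
      by (simp add: g1 algebra_simps)
    finally show ?thesis .
  qed
  with K(1) that show ?thesis by blast
qed

lemma F_meas:
  assumes "good h" shows "(\<lambda>(v,w). h v w * g v * g w) \<in> borel_measurable (lborel \<Otimes>\<^sub>M lborel)"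
proof -
  have [measurable]: "(\<lambda>p. h (fst p) (snd p)) \<in> borel_measurable (lborel \<Otimes>\<^sub>M lborel)"
    by (rule good_meas2[OF assms])
  have "(\<lambda>p. h (fst p) (snd p) * g (fst p) * g (snd p)) \<in> borel_measurable (lborel \<Otimes>\<^sub>M lborel)"
    by measurable
  then show ?thesis by (simp add: case_prod_beta')
qed

lemma outer_int:
  assumes "good h" shows "integrable lborel (\<lambda>v. \<integral>w. h v w * g v * g w \<partial>lborel)"
proof -
  obtain K where K: "K \<ge> 0" "\<And>v. \<bar>\<integral>w. h v w * g v * g w \<partial>lborel\<bar> \<le> K * ((1 + M2) * g v + (norm v)\<^sup>2 * g v)"
    using inner_bound[OF assms] by blast
  have [measurable]: "(\<lambda>(v,w). h v w * g v * g w) \<in> borel_measurable (lborel \<Otimes>\<^sub>M lborel)"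
    by (rule F_meas[OF assms])
  show ?thesis
  proof (rule Bochner_Integration.integrable_bound[where f="\<lambda>v. K * ((1 + M2) * g v + (norm v)\<^sup>2 * g v)"])
    show "integrable lborel (\<lambda>v. K * ((1 + M2) * g v + (norm v)\<^sup>2 * g v))"
      using gi g2 by (intro integrable_mult_right integrable_add) auto
    show "(\<lambda>v. \<integral>w. h v w * g v * g w \<partial>lborel) \<in> borel_measurable lborel"
      by (rule lborel.borel_measurable_lebesgue_integral) simp
    show "AE v in lborel. norm (\<integral>w. h v w * g v * g w \<partial>lborel) \<le> norm (K * ((1 + M2) * g v + (norm v)\<^sup>2 * g v))"
      using K gnn M2_nonneg by (intro AE_I2) (auto intro!: order_trans[OF _ abs_ge_self])
  qed
qed

lemma I_add: "good a \<Longrightarrow> good b \<Longrightarrow> I (\<lambda>v w. a v w + b v w) = I a + I b"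
  unfolding I_def
  by (simp add: distrib_right integral_add inner_int outer_int flip: integral_add)

lemma I_cmult: "I (\<lambda>v w. c * a v w) = c * I a"
  unfolding I_def by (simp add: mult.assoc)

lemma I_zero: "I (\<lambda>v w. 0) = 0"
  unfolding I_def by simp

lemma I_sum: "(\<And>i. i \<in> S \<Longrightarrow> good (a i)) \<Longrightarrow> I (\<lambda>v w. \<Sum>i\<in>S. a i v w) = (\<Sum>i\<in>S. I (a i))"
proof (induction S rule: infinite_finite_induct)
  case (infinite A) then show ?case by (simp add: I_zero)
next
  case empty then show ?case by (simp add: I_zero)
next
  case (insert x F) then show ?case by (simp add: I_add good_sum)
qed

lemma I_mono: "good a \<Longrightarrow> good b \<Longrightarrow> (\<And>v w. a v w \<le> b v w) \<Longrightarrow> I a \<le> I b"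
  unfolding I_def
  by (intro integral_mono outer_int inner_int mult_right_mono gnn) auto

lemma I_sep: "I (\<lambda>v w. p v * q w) = (\<integral>v. p v * g v \<partial>lborel) * (\<integral>w. q w * g w \<partial>lborel)"
proof -
  have "\<And>v. (\<lambda>w. p v * q w * g v * g w) = (\<lambda>w. (p v * g v) * (q w * g w))" by (auto simp: mult_ac)
  then have "I (\<lambda>v w. p v * q w) = (\<integral>v. (p v * g v) * (\<integral>w. q w * g w \<partial>lborel) \<partial>lborel)"
    unfolding I_def by (simp only: integral_mult_right_zero)
  then show ?thesis by simp
qed

lemma I_swap:
  assumes "good a" shows "I (\<lambda>v w. a w v) = I a"
proof -
  have int: "integrable (lborel \<Otimes>\<^sub>M lborel) (case_prod (\<lambda>v w. a v w * g v * g w))"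
  proof (rule lborel_pair.Fubini_integrable)
    show "(\<lambda>(v,w). a v w * g v * g w) \<in> borel_measurable (lborel \<Otimes>\<^sub>M lborel)"
      by (rule F_meas[OF assms])
    have "integrable lborel (\<lambda>v. \<integral>w. \<bar>a v w\<bar> * g v * g w \<partial>lborel)"
      by (rule outer_int[OF good_abs[OF assms]])
    moreover have "\<And>v w. norm (case_prod (\<lambda>v w. a v w * g v * g w) (v, w)) = \<bar>a v w\<bar> * g v * g w"
      using gnn by (simp add: abs_mult)
    ultimately show "integrable lborel (\<lambda>x. \<integral>y. norm (case_prod (\<lambda>v w. a v w * g v * g w) (x, y)) \<partial>lborel)"
      by simp
    show "AE x in lborel. integrable lborel (\<lambda>y. case_prod (\<lambda>v w. a v w * g v * g w) (x, y))"
      using inner_int[OF assms] by simp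
  qed
  have "I a = (\<integral>w. (\<integral>v. a v w * g v * g w \<partial>lborel) \<partial>lborel)"
    unfolding I_def using lborel_pair.Fubini_integral[OF int] by simp
  also have "\<dots> = I (\<lambda>v w. a w v)"
    unfolding I_def by (simp add: mult_ac)
  finally show ?thesis by simp
qed

end

lemma nsq: "(norm (x::real^'n))\<^sup>2 = (\<Sum>i\<in>UNIV. (x$i)\<^sup>2)"
  unfolding power2_norm_eq_inner inner_vec_def by (simp add: power2_eq_square)

lemma norm_le_sq: "norm (x::'a::real_normed_vector) \<le> 1 + (norm x)\<^sup>2"
proof -
  have e: "1 + (norm x)\<^sup>2 - norm x = (norm x - 1/2)\<^sup>2 + 3/4"
    by (simp add: power2_eq_square algebra_simps)
  have "0 \<le> (norm x - 1/2)\<^sup>2" by simp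
  with e show ?thesis by linarith
qed

lemma good_sq: "lin a \<Longrightarrow> good (\<lambda>v w. (a v w)\<^sup>2)"
  using good_mult_lin[of a a] by (simp add: power2_eq_square)

lemma good_sq_fst: "good (\<lambda>(v::real^'n) (w::real^'n). (v $ i)\<^sup>2)"
  by (rule good_sq[OF lin_fst])

lemma good_nsq: "good (\<lambda>(v::real^'n) (w::real^'n). (norm v)\<^sup>2)"
  unfolding good_def by (auto intro!: continuous_intros exI[of _ 1])

lemma good_const: "good (\<lambda>(v::real^'n) (w::real^'n). c)"
  by (rule lin_imp_good[OF lin_const])

lemma lin_fst_c: "lin (\<lambda>(v::real^'n) (w::real^'n). v $ i - c)"
  using lin_add[OF lin_fst lin_const[of "-c"]] by simp

lemma lin_snd_c: "lin (\<lambda>(v::real^'n) (w::real^'n). w $ i - c)"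
  using lin_add[OF lin_snd lin_const[of "-c"]] by simp

context dens begin

definition mm where "mm i = (\<integral>v. v $ i * g v \<partial>lborel)"

lemma int_vi: "integrable lborel (\<lambda>v. v $ i * g v)"
proof (rule Bochner_Integration.integrable_bound[where f="\<lambda>v. g v + (norm v)\<^sup>2 * g v"])
  show "integrable lborel (\<lambda>v. g v + (norm v)\<^sup>2 * g v)" using gi g2 by auto
  show "(\<lambda>v. v $ i * g v) \<in> borel_measurable lborel" by measurable
  show "AE v in lborel. norm (v $ i * g v) \<le> norm (g v + (norm v)\<^sup>2 * g v)"
  proof (intro AE_I2)
    fix v :: "real^'n"
    have "\<bar>v $ i\<bar> \<le> 1 + (norm v)\<^sup>2" using component_le_norm_cart[of v i] norm_le_sq[of v] by simp
    then have "\<bar>v $ i\<bar> * g v \<le> (1 + (norm v)\<^sup>2) * g v" using gnn by (intro mult_right_mono) auto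
    then show "norm (v $ i * g v) \<le> norm (g v + (norm v)\<^sup>2 * g v)"
      using gnn by (simp add: abs_mult algebra_simps)
  qed
qed

lemma int_vec: "integrable lborel (\<lambda>v. g v *\<^sub>R v)"
proof (rule Bochner_Integration.integrable_bound[where f="\<lambda>v. g v + (norm v)\<^sup>2 * g v"])
  show "integrable lborel (\<lambda>v. g v + (norm v)\<^sup>2 * g v)" using gi g2 by auto
  show "(\<lambda>v. g v *\<^sub>R v) \<in> borel_measurable lborel" by measurable
  show "AE v in lborel. norm (g v *\<^sub>R v) \<le> norm (g v + (norm v)\<^sup>2 * g v)"
  proof (intro AE_I2)
    fix v :: "real^'n"
    have "norm v * g v \<le> (1 + (norm v)\<^sup>2) * g v" using gnn norm_le_sq[of v] by (intro mult_right_mono) auto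
    then show "norm (g v *\<^sub>R v) \<le> norm (g v + (norm v)\<^sup>2 * g v)"
      using gnn by (simp add: abs_mult algebra_simps)
  qed
qed

lemma mean_comp: "(\<integral>v. g v *\<^sub>R v \<partial>lborel) $ i = mm i"
  unfolding mm_def
  using integral_bounded_linear[OF bounded_linear_vec_nth int_vec, of i] by (simp add: mult.commute)

lemma I_fst: "I (\<lambda>v w. p v) = (\<integral>v. p v * g v \<partial>lborel)"
  using I_sep[of p "\<lambda>w. 1"] by (simp add: g1)

lemma I_snd: "I (\<lambda>v w. q w) = (\<integral>w. q w * g w \<partial>lborel)"
  using I_sep[of "\<lambda>w. 1" q] by (simp add: g1)

lemma I_vi: "I (\<lambda>v w. v $ i) = mm i"
  by (simp add: I_fst mm_def)

lemma I_const: "I (\<lambda>v w. c) = c"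
  using I_fst[of "\<lambda>v. c"] by (simp add: g1)

lemma I_add3: "good a \<Longrightarrow> good b \<Longrightarrow> good c \<Longrightarrow>
   I (\<lambda>v w. a v w + b v w + c v w) = I a + I b + I c"
  by (simp add: I_add good_add)

lemma centered: "(\<integral>v. (v $ i - mm i) * g v \<partial>lborel) = 0"
  using int_vi[of i] gi by (simp add: left_diff_distrib g1 mm_def)

lemma var_I: "1/2 * (\<integral>v. (norm (v - (\<integral>v. g v *\<^sub>R v \<partial>lborel)))\<^sup>2 * g v \<partial>lborel)
    = 1/2 * I (\<lambda>v w. \<Sum>i\<in>UNIV. (v $ i - mm i)\<^sup>2)"
  by (simp add: I_fst nsq mean_comp)

lemma I_A: "I (\<lambda>v w. \<Sum>i\<in>UNIV. (v $ i - mm i)\<^sup>2) = M2 - (\<Sum>i\<in>UNIV. (mm i)\<^sup>2)"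
proof -
  have "I (\<lambda>v w. \<Sum>i\<in>UNIV. (v $ i - mm i)\<^sup>2) =
        I (\<lambda>v w. \<Sum>i\<in>UNIV. ((v $ i)\<^sup>2 + (-2 * mm i) * v $ i + (mm i)\<^sup>2))"
    by (simp add: power2_diff algebra_simps)
  also have "\<dots> = (\<Sum>i\<in>UNIV. I (\<lambda>v w. (v $ i)\<^sup>2) + (-2 * mm i) * I (\<lambda>v w. v $ i) + (mm i)\<^sup>2)"
  proof (subst I_sum)
    fix i :: 'n
    show "good (\<lambda>v w. (v $ i)\<^sup>2 + - 2 * mm i * v $ i + (mm i)\<^sup>2)"
      by (intro good_add good_sq_fst good_cmult lin_imp_good lin_fst good_const)
    show "(\<Sum>i\<in>UNIV. I (\<lambda>v w. (v $ i)\<^sup>2 + - 2 * mm i * v $ i + (mm i)\<^sup>2)) =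
      (\<Sum>i\<in>UNIV. I (\<lambda>v w. (v $ i)\<^sup>2) + - 2 * mm i * I (\<lambda>v w. v $ i) + (mm i)\<^sup>2)"
    proof (rule sum.cong[OF refl])
      fix i :: 'n
      have "I (\<lambda>v w. (v $ i)\<^sup>2 + - 2 * mm i * v $ i + (mm i)\<^sup>2) =
          I (\<lambda>v w. (v $ i)\<^sup>2) + I (\<lambda>v w. - 2 * mm i * v $ i) + I (\<lambda>v w. (mm i)\<^sup>2)"
        by (rule I_add3) (intro good_add good_sq_fst good_cmult lin_imp_good lin_fst good_const)+
      then show "I (\<lambda>v w. (v $ i)\<^sup>2 + - 2 * mm i * v $ i + (mm i)\<^sup>2) =
          I (\<lambda>v w. (v $ i)\<^sup>2) + - 2 * mm i * I (\<lambda>v w. v $ i) + (mm i)\<^sup>2"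
        by (simp only: I_cmult[of "-2 * mm i" "\<lambda>v w. v $ i"] I_const)
    qed
  qed
  also have "\<dots> = (\<Sum>i\<in>UNIV. I (\<lambda>v w. (v $ i)\<^sup>2)) - (\<Sum>i\<in>UNIV. (mm i)\<^sup>2)"
  proof -
    have "\<And>i. I (\<lambda>v w. (v $ i)\<^sup>2) + - 2 * mm i * I (\<lambda>v w. v $ i) + (mm i)\<^sup>2 = I (\<lambda>v w. (v $ i)\<^sup>2) - (mm i)\<^sup>2"
      by (simp add: I_vi power2_eq_square)
    then show ?thesis by (simp add: sum_subtractf)
  qed
  also have "(\<Sum>i\<in>UNIV. I (\<lambda>v w. (v $ i)\<^sup>2)) = I (\<lambda>v w. (norm v)\<^sup>2)"
    by (subst nsq, subst I_sum) (auto intro: good_sq_fst lin_fst)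
  also have "\<dots> = M2" by (simp add: I_fst M2_def)
  finally show ?thesis .
qed

end

lemma frac_lo: "0<a \<Longrightarrow> 0<b \<Longrightarrow> 1 \<le> C \<Longrightarrow> a \<le> C*b \<Longrightarrow> 1/(1+C) \<le> b/(a+b::real)"
  by (simp add: divide_simps algebra_simps)
lemma frac_hi: "0<a \<Longrightarrow> 0<b \<Longrightarrow> 1 \<le> C \<Longrightarrow> b \<le> C*a \<Longrightarrow> b/(a+b) \<le> C/(1+C::real)"
  by (simp add: divide_simps algebra_simps)
lemma exp_sum_pos[simp]: "0 < exp (a::real) + exp b" by (intro add_pos_pos exp_gt_zero)
lemma exp_sum_ne[simp]: "exp (a::real) + exp b \<noteq> 0" using exp_sum_pos[of a b] by linarith

lemma vb_gen: "a + b \<noteq> 0 \<Longrightarrow> (1/(a+b)) *\<^sub>R (a *\<^sub>R v + b *\<^sub>R w) - v = (b/(a+b)) *\<^sub>R (w - (v::'a::real_vector))"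
proof -
  assume ab: "a + b \<noteq> 0"
  have "(1/(a+b)) *\<^sub>R (a *\<^sub>R v + b *\<^sub>R w) - v = (1/(a+b)) *\<^sub>R (a *\<^sub>R v + b *\<^sub>R w) - (1/(a+b)) *\<^sub>R ((a+b) *\<^sub>R v)"
    using ab by simp
  also have "\<dots> = (1/(a+b)) *\<^sub>R (b *\<^sub>R (w - v))"
    by (simp only: scaleR_diff_right[symmetric]) (simp add: algebra_simps)
  also have "\<dots> = (b/(a+b)) *\<^sub>R (w-v)" by simp
  finally show ?thesis .
qed

lemma exp_lin:
  assumes "iid_noise P Xi"
  shows "(\<integral>\<omega>. c + a * (Xi \<omega> $ i) \<partial>P) = (c::real)"
proof -
  interpret prob_space P using assms unfolding iid_noise_def by auto
  have m: "(\<lambda>\<omega>. Xi \<omega> $ i) \<in> borel_measurable P" using assms unfolding iid_noise_def by auto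
  have i: "integrable P (\<lambda>\<omega>. Xi \<omega> $ i)"
    using square_integrable_imp_integrable[OF m] assms unfolding iid_noise_def by auto
  have z: "(\<integral>\<omega>. Xi \<omega> $ i \<partial>P) = 0" using assms unfolding iid_noise_def by auto
  show ?thesis using i z prob_space by (simp add: integral_add)
qed

lemma exp_quad:
  assumes "iid_noise P Xi"
  shows "(\<integral>\<omega>. c + (\<Sum>i\<in>UNIV. a i * (Xi \<omega> $ i)) + (\<Sum>i\<in>UNIV. b i * (Xi \<omega> $ i)\<^sup>2) \<partial>P)
     = (c::real) + (\<Sum>i\<in>UNIV. b i)"
proof -
  interpret prob_space P using assms unfolding iid_noise_def by auto
  have m: "\<And>i. (\<lambda>\<omega>. Xi \<omega> $ i) \<in> borel_measurable P" using assms unfolding iid_noise_def by auto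
  have i2: "\<And>i. integrable P (\<lambda>\<omega>. (Xi \<omega> $ i)\<^sup>2)" using assms unfolding iid_noise_def by auto
  have i: "\<And>i. integrable P (\<lambda>\<omega>. Xi \<omega> $ i)"
    using square_integrable_imp_integrable[OF m i2] by auto
  have z: "\<And>i. (\<integral>\<omega>. Xi \<omega> $ i \<partial>P) = 0" using assms unfolding iid_noise_def by auto
  have o: "\<And>i. (\<integral>\<omega>. (Xi \<omega> $ i)\<^sup>2 \<partial>P) = 1" using assms unfolding iid_noise_def by auto
  have "(\<integral>\<omega>. c + (\<Sum>i\<in>UNIV. a i * (Xi \<omega> $ i)) + (\<Sum>i\<in>UNIV. b i * (Xi \<omega> $ i)\<^sup>2) \<partial>P)
     = (\<integral>\<omega>. c \<partial>P) + (\<Sum>i\<in>UNIV. a i * (\<integral>\<omega>. Xi \<omega> $ i \<partial>P)) + (\<Sum>i\<in>UNIV. b i * (\<integral>\<omega>. (Xi \<omega> $ i)\<^sup>2 \<partial>P))"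
    using i i2 by (simp add: integral_add integral_sum)
  also have "\<dots> = c + (\<Sum>i\<in>UNIV. b i)" using z o prob_space by simp
  finally show ?thesis .
qed

locale prm =
  fixes E :: "real^'n \<Rightarrow> real" and \<beta> :: real
  assumes Econt: "continuous_on UNIV E"
    and Ea: "bdd_above (range E)" and Eb: "bdd_below (range E)"
    and bnn: "0 \<le> \<beta>"
begin

abbreviation gam where "gam \<equiv> gamma_w \<beta> E"
abbreviation Cb where "Cb \<equiv> C_beta \<beta> E"

lemma Efst: "continuous_on UNIV (\<lambda>p. E (fst p))"
  by (rule continuous_on_compose2[OF Econt]) (auto intro: continuous_intros)
lemma Esnd: "continuous_on UNIV (\<lambda>p. E (snd p))"
  by (rule continuous_on_compose2[OF Econt]) (auto intro: continuous_intros)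

lemma gam_cont: "continuous_on UNIV (\<lambda>p. gam (fst p) (snd p))"
  unfolding gamma_w_def omega_w_def
  by (intro continuous_intros Efst Esnd) auto

lemma gam_eq: "gam v w = exp (- \<beta> * E w) / (exp (- \<beta> * E v) + exp (- \<beta> * E w))"
  unfolding gamma_w_def omega_w_def ..

lemma gam_01: "0 \<le> gam v w" "gam v w \<le> 1"
  unfolding gam_eq by (auto simp: divide_simps add_pos_pos)

lemma bdd_gam: "bdd (\<lambda>v w. gam v w)"
  unfolding bdd_def using gam_cont gam_01 by (auto intro!: exI[of _ 1])

lemma gam_sym: "gam w v = 1 - gam v w"
  unfolding gam_eq by (simp add: divide_simps add_pos_pos add.commute)

lemma Cb_def': "Cb = exp (\<beta> * (Sup (range E) - Inf (range E)))"
  unfolding C_beta_def ..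

lemma ratio: "exp (- \<beta> * E v) \<le> Cb * exp (- \<beta> * E w)"
proof -
  have "E w \<le> Sup (range E)" by (rule cSup_upper[OF _ Ea]) auto
  moreover have "Inf (range E) \<le> E v" by (rule cInf_lower[OF _ Eb]) auto
  ultimately have "\<beta> * (E w - E v) \<le> \<beta> * (Sup (range E) - Inf (range E))"
    using bnn by (intro mult_left_mono) auto
  then have "- \<beta> * E v \<le> \<beta> * (Sup (range E) - Inf (range E)) + - \<beta> * E w"
    by (simp add: algebra_simps)
  then have "exp (- \<beta> * E v) \<le> exp (\<beta> * (Sup (range E) - Inf (range E)) + - \<beta> * E w)"
    by (simp only: exp_le_cancel_iff)
  then show ?thesis unfolding Cb_def' by (simp only: exp_add)
qed

lemma Cb_ge1: "1 \<le> Cb"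
  using ratio[of v v] by simp

lemma gam_lo: "1 / (1 + Cb) \<le> gam v w"
proof -
  have "exp (- \<beta> * E v) \<le> Cb * exp (- \<beta> * E w)" by (rule ratio)
  then show ?thesis unfolding gam_eq using Cb_ge1 by (intro frac_lo) auto
qed

lemma gam_hi: "gam v w \<le> Cb / (1 + Cb)"
proof -
  have "exp (- \<beta> * E w) \<le> Cb * exp (- \<beta> * E v)" by (rule ratio)
  then show ?thesis unfolding gam_eq using Cb_ge1 by (intro frac_hi) auto
qed

lemma gam_half: "\<bar>gam v w - 1/2\<bar> \<le> (Cb - 1) / (2 * (Cb + 1))"
proof -
  have a: "1 / (1 + Cb) - 1/2 = - ((Cb - 1) / (2 * (Cb + 1)))" using Cb_ge1 by (simp add: field_simps)
  have b: "Cb / (1 + Cb) - 1/2 = (Cb - 1) / (2 * (Cb + 1))" using Cb_ge1 by (simp add: field_simps)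
  show ?thesis using gam_lo[of v w] gam_hi[of v w] a b by linarith
qed

lemma vbest: "v_best \<beta> E v w - v = gam v w *\<^sub>R (w - v)"
  unfolding v_best_def gamma_w_def omega_w_def
  by (rule vb_gen) simp

end

definition ddf :: "noise \<Rightarrow> real \<Rightarrow> (real^'n \<Rightarrow> real) \<Rightarrow> 'n \<Rightarrow> real^'n \<Rightarrow> real^'n \<Rightarrow> real" where
  "ddf nt \<beta> E i v w = (case nt of Isotropic \<Rightarrow> norm (gamma_w \<beta> E v w *\<^sub>R (w - v))
                         | Anisotropic \<Rightarrow> gamma_w \<beta> E v w * (w$i - v$i))"

lemma lin_diff_sw: "lin (\<lambda>(v::real^'n) (w::real^'n). w $ i - v $ i)"
  using lin_add[OF lin_snd lin_cmult[OF lin_fst, of "-1"], of i i] by simp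

lemma key_ineq:
  fixes A B X g lam c \<rho> :: real
  assumes "0 \<le> A" "0 \<le> B" "0 \<le> A + B - 2*X" "0 \<le> g" "g \<le> 1" "\<bar>g - 1/2\<bar> \<le> \<rho>" "0 \<le> lam" "0 \<le> c"
  shows "(lam * g * (X - A) + c * g\<^sup>2 * (A + B - 2*X)) + (lam * (1-g) * (X - B) + c * (1-g)\<^sup>2 * (A + B - 2*X))
     \<le> (lam*(\<rho> - 1/2) + c) * (A + B) + (lam - 2*c) * X"
proof -
  have 1: "(1/2 - g) * A \<le> \<rho> * A" using assms by (intro mult_right_mono) auto
  have 2: "(g - 1/2) * B \<le> \<rho> * B" using assms by (intro mult_right_mono) auto
  have 3: "lam * ((1/2 - g)*A + (g-1/2)*B) \<le> lam * (\<rho>*A + \<rho>*B)"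
    using 1 2 assms by (intro mult_left_mono) auto
  have "0 \<le> g * (1 - g)" using assms by auto
  then have 4: "g\<^sup>2 + (1-g)\<^sup>2 \<le> 1" by (simp add: power2_eq_square algebra_simps)
  have 5: "c * (g\<^sup>2 + (1-g)\<^sup>2) * (A + B - 2*X) \<le> c * 1 * (A + B - 2*X)"
    using 4 assms by (intro mult_right_mono mult_left_mono) auto
  have e1: "(lam * g * (X - A) + c * g\<^sup>2 * (A + B - 2*X)) + (lam * (1-g) * (X - B) + c * (1-g)\<^sup>2 * (A + B - 2*X))
     = lam * X - lam/2 * (A+B) + lam * ((1/2 - g)*A + (g-1/2)*B) + c * (g\<^sup>2 + (1-g)\<^sup>2) * (A + B - 2*X)"
    by (simp add: algebra_simps)
  have e2: "(lam*(\<rho> - 1/2) + c) * (A + B) + (lam - 2*c) * X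
     = lam * X - lam/2 * (A+B) + lam * (\<rho>*A + \<rho>*B) + c * 1 * (A + B - 2*X)"
    by (simp add: algebra_simps)
  show ?thesis unfolding e1 e2 using 3 5 by linarith
qed

locale prm2 = prm E \<beta> for E :: "real^'n \<Rightarrow> real" and \<beta> +
  fixes nt :: noise and lam sig :: real
begin

definition ee where "ee i v w = lam * gam v w * (w$i - v$i)"
definition dd where "dd i v w = ddf nt \<beta> E i v w"
definition aa where "aa i v w = 2 * v$i * ee i v w + (ee i v w)\<^sup>2"
definition bb where "bb i v w = 2 * sig * dd i v w * (v$i + ee i v w)"
definition qq where "qq i v w = sig\<^sup>2 * (dd i v w)\<^sup>2"

lemma lin_ee: "lin (ee i)"
proof -
  have "lin (\<lambda>v w. lam * (gam v w * (w$i - v$i)))"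
    by (intro lin_cmult bdd_mult_lin bdd_gam lin_diff_sw)
  then show ?thesis unfolding ee_def[abs_def] by (simp add: mult.assoc)
qed

lemma lin_dd: "lin (dd i)"
proof -
  have "lin (\<lambda>v w. ddf nt \<beta> E i v w)"
  proof (cases nt)
    case Isotropic
    have c: "continuous_on UNIV (\<lambda>p. norm (gam (fst p) (snd p) *\<^sub>R (snd p - fst p)))"
      by (intro continuous_intros gam_cont)
    have b: "\<bar>norm (gam v w *\<^sub>R (w - v))\<bar> \<le> 1 * (1 + norm v + norm w)" for v w
    proof -
      have "\<bar>norm (gam v w *\<^sub>R (w - v))\<bar> = gam v w * norm (w - v)" using gam_01[of v w] by simp
      also have "\<dots> \<le> 1 * norm (w - v)" using gam_01[of v w] by (intro mult_right_mono) auto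
      also have "\<dots> \<le> 1 * (1 + norm v + norm w)" using norm_triangle_ineq4[of w v] by simp
      finally show ?thesis .
    qed
    show ?thesis unfolding lin_def ddf_def Isotropic noise.case
      apply (intro conjI c exI[of _ 1])
      using b by auto
  next
    case Anisotropic
    have "lin (\<lambda>v w. gam v w * (w$i - v$i))"
      by (intro bdd_mult_lin bdd_gam lin_diff_sw)
    then show ?thesis unfolding ddf_def Anisotropic by simp
  qed
  then show ?thesis unfolding dd_def[abs_def] .
qed

lemma good_aa: "good (aa i)"
proof -
  have "good (\<lambda>v w. (2 * v$i) * ee i v w + (ee i v w)\<^sup>2)"
    by (intro good_add good_mult_lin lin_cmult lin_fst lin_ee good_sq)
  then show ?thesis unfolding aa_def[abs_def] .
qed

lemma good_bb: "good (bb i)"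
proof -
  have "good (\<lambda>v w. (2 * sig * dd i v w) * (v$i + ee i v w))"
    by (intro good_mult_lin lin_cmult lin_dd lin_add lin_fst lin_ee)
  then show ?thesis unfolding bb_def[abs_def] .
qed

lemma good_qq: "good (qq i)"
  unfolding qq_def[abs_def] by (intro good_cmult good_sq lin_dd)

lemma good_ee: "good (ee i)" by (rule lin_imp_good[OF lin_ee])
lemma good_dd: "good (dd i)" by (rule lin_imp_good[OF lin_dd])

lemma sum_delta_mul: "(\<Sum>j\<in>UNIV. (if i = j then k else 0) * f j) = (k::real) * f (i::'m::finite)"
proof -
  have "(\<lambda>j. (if i = j then k else 0) * f j) = (\<lambda>j. if i = j then k * f j else 0)" by auto
  show ?thesis unfolding \<open>(\<lambda>j. (if i = j then k else 0) * f j) = (\<lambda>j. if i = j then k * f j else 0)\<close> by simp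
qed

lemma dmv: "(diff_mat nt \<beta> E v w *v x) $ i = dd i v w * x $ i"
  unfolding dd_def ddf_def
  by (cases nt) (simp_all add: diff_mat_def matrix_vector_mult_def mat_def vbest sum_delta_mul)

lemma vpost_i: "(v_post nt \<beta> lam sig E v w x) $ i = v $ i + ee i v w + sig * (dd i v w * x $ i)"
  by (simp add: v_post_def dmv ee_def algebra_simps)

lemma dd_sq: "(\<Sum>i\<in>UNIV. (dd i v w)\<^sup>2) = kappa nt TYPE('n) * (gam v w)\<^sup>2 * (\<Sum>i\<in>UNIV. (w$i - v$i)\<^sup>2)"
proof -
  have "(\<Sum>i\<in>UNIV. (dd i v w)\<^sup>2) = (\<Sum>i\<in>UNIV. (ddf nt \<beta> E i v w)\<^sup>2)" by (simp only: dd_def)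
  also have "\<dots> = kappa nt TYPE('n) * (gam v w)\<^sup>2 * (\<Sum>i\<in>UNIV. (w$i - v$i)\<^sup>2)"
  proof (cases nt)
    case Isotropic
    have "(norm (gam v w *\<^sub>R (w - v)))\<^sup>2 = (gam v w)\<^sup>2 * (\<Sum>i\<in>UNIV. (w$i - v$i)\<^sup>2)"
      by (simp only: norm_scaleR power_mult_distrib nsq[of "w - v"]) simp
    then show ?thesis by (simp add: ddf_def Isotropic kappa_def)
  next
    case Anisotropic
    then show ?thesis by (simp add: ddf_def kappa_def power_mult_distrib sum_distrib_left)
  qed
  finally show ?thesis .
qed

lemma coll_i:
  assumes "dens g" "iid_noise P Xi"
  shows "(\<integral>\<omega>. (\<integral>v. (\<integral>w. ((v_post nt \<beta> lam sig E v w (Xi \<omega>)) $ i - v $ i) * g v * g w \<partial>lborel) \<partial>lborel) \<partial>P)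
    = dens.I g (ee i)"
proof -
  interpret dens g by fact
  have pt: "\<And>\<omega> v w. (v_post nt \<beta> lam sig E v w (Xi \<omega>)) $ i - v $ i = ee i v w + (Xi \<omega> $ i) * (sig * dd i v w)"
    by (simp add: vpost_i algebra_simps)
  have eq: "\<And>\<omega>. (\<integral>v. (\<integral>w. ((v_post nt \<beta> lam sig E v w (Xi \<omega>)) $ i - v $ i) * g v * g w \<partial>lborel) \<partial>lborel)
     = I (ee i) + I (\<lambda>v w. sig * dd i v w) * (Xi \<omega> $ i)"
  proof -
    fix \<omega>
    have "(\<integral>v. (\<integral>w. ((v_post nt \<beta> lam sig E v w (Xi \<omega>)) $ i - v $ i) * g v * g w \<partial>lborel) \<partial>lborel)
     = I (\<lambda>v w. ee i v w + (Xi \<omega> $ i) * (sig * dd i v w))"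
      unfolding I_def by (simp only: pt)
    also have "\<dots> = I (ee i) + I (\<lambda>v w. sig * dd i v w) * (Xi \<omega> $ i)"
      by (subst I_add) (auto intro!: good_ee good_cmult good_dd simp: I_cmult)
    finally show "?thesis \<omega>" .
  qed
  show ?thesis unfolding eq by (rule exp_lin[OF assms(2)])
qed

lemma coll_2:
  assumes "dens g" "iid_noise P Xi"
  shows "(\<integral>\<omega>. (\<integral>v. (\<integral>w. ((norm (v_post nt \<beta> lam sig E v w (Xi \<omega>)))\<^sup>2 - (norm v)\<^sup>2) * g v * g w \<partial>lborel) \<partial>lborel) \<partial>P)
    = (\<Sum>i\<in>UNIV. dens.I g (aa i)) + (\<Sum>i\<in>UNIV. dens.I g (qq i))"
proof -
  interpret dens g by fact
  have pt: "\<And>\<omega> v w. (norm (v_post nt \<beta> lam sig E v w (Xi \<omega>)))\<^sup>2 - (norm v)\<^sup>2 =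
     (\<Sum>i\<in>UNIV. aa i v w + (Xi \<omega> $ i) * bb i v w + (Xi \<omega> $ i)\<^sup>2 * qq i v w)"
  proof -
    fix \<omega> v w
    show "(norm (v_post nt \<beta> lam sig E v w (Xi \<omega>)))\<^sup>2 - (norm v)\<^sup>2 =
     (\<Sum>i\<in>UNIV. aa i v w + (Xi \<omega> $ i) * bb i v w + (Xi \<omega> $ i)\<^sup>2 * qq i v w)"
      unfolding nsq sum_subtractf[symmetric]
      by (rule sum.cong[OF refl]) (simp add: vpost_i aa_def bb_def qq_def power2_eq_square algebra_simps)
  qed
  have eq: "\<And>\<omega>. (\<integral>v. (\<integral>w. ((norm (v_post nt \<beta> lam sig E v w (Xi \<omega>)))\<^sup>2 - (norm v)\<^sup>2) * g v * g w \<partial>lborel) \<partial>lborel)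
     = (\<Sum>i\<in>UNIV. I (aa i)) + (\<Sum>i\<in>UNIV. I (bb i) * (Xi \<omega> $ i)) + (\<Sum>i\<in>UNIV. I (qq i) * (Xi \<omega> $ i)\<^sup>2)"
  proof -
    fix \<omega>
    have "(\<integral>v. (\<integral>w. ((norm (v_post nt \<beta> lam sig E v w (Xi \<omega>)))\<^sup>2 - (norm v)\<^sup>2) * g v * g w \<partial>lborel) \<partial>lborel)
     = I (\<lambda>v w. \<Sum>i\<in>UNIV. aa i v w + (Xi \<omega> $ i) * bb i v w + (Xi \<omega> $ i)\<^sup>2 * qq i v w)"
      unfolding I_def by (simp only: pt)
    also have "\<dots> = (\<Sum>i\<in>UNIV. I (aa i) + (Xi \<omega> $ i) * I (bb i) + (Xi \<omega> $ i)\<^sup>2 * I (qq i))"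
    proof (subst I_sum)
      fix i :: 'n
      show "good (\<lambda>v w. aa i v w + (Xi \<omega> $ i) * bb i v w + (Xi \<omega> $ i)\<^sup>2 * qq i v w)"
        by (intro good_add good_cmult good_aa good_bb good_qq)
      show "(\<Sum>i\<in>UNIV. I (\<lambda>v w. aa i v w + (Xi \<omega> $ i) * bb i v w + (Xi \<omega> $ i)\<^sup>2 * qq i v w)) =
         (\<Sum>i\<in>UNIV. I (aa i) + (Xi \<omega> $ i) * I (bb i) + (Xi \<omega> $ i)\<^sup>2 * I (qq i))"
      proof (rule sum.cong[OF refl])
        fix i :: 'n
        have "I (\<lambda>v w. aa i v w + (Xi \<omega> $ i) * bb i v w + (Xi \<omega> $ i)\<^sup>2 * qq i v w)
           = I (aa i) + I (\<lambda>v w. (Xi \<omega> $ i) * bb i v w) + I (\<lambda>v w. (Xi \<omega> $ i)\<^sup>2 * qq i v w)"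
          by (rule I_add3) (intro good_cmult good_aa good_bb good_qq)+
        then show "I (\<lambda>v w. aa i v w + (Xi \<omega> $ i) * bb i v w + (Xi \<omega> $ i)\<^sup>2 * qq i v w)
           = I (aa i) + (Xi \<omega> $ i) * I (bb i) + (Xi \<omega> $ i)\<^sup>2 * I (qq i)"
          by (simp only: I_cmult)
      qed
    qed
    also have "\<dots> = (\<Sum>i\<in>UNIV. I (aa i)) + (\<Sum>i\<in>UNIV. I (bb i) * (Xi \<omega> $ i)) + (\<Sum>i\<in>UNIV. I (qq i) * (Xi \<omega> $ i)\<^sup>2)"
      by (simp add: sum.distrib mult.commute)
    finally show "?thesis \<omega>" .
  qed
  show ?thesis unfolding eq by (rule exp_quad[OF assms(2)])
qed

end

lemma good_swap: "good a \<Longrightarrow> good (\<lambda>v w. a w v)"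
  unfolding good_def
proof (elim conjE exE, intro conjI)
  assume c: "continuous_on UNIV (\<lambda>p. a (fst p) (snd p))"
  have "continuous_on UNIV (\<lambda>p. (\<lambda>p. a (fst p) (snd p)) (snd p, fst p))"
    apply (rule continuous_on_compose2[OF c])
    using continuous_on_swap[of UNIV] by (auto simp: prod.swap_def)
  then show "continuous_on UNIV (\<lambda>p. a (snd p) (fst p))" by simp
  fix K assume K: "0 \<le> K" "\<forall>v w. \<bar>a v w\<bar> \<le> K * (1 + (norm v)\<^sup>2 + (norm w)\<^sup>2)"
  show "\<exists>K\<ge>0. \<forall>v w. \<bar>a w v\<bar> \<le> K * (1 + (norm v)\<^sup>2 + (norm w)\<^sup>2)"
  proof (intro exI[of _ K] conjI allI)
    fix v w
    have "\<bar>a w v\<bar> \<le> K * (1 + (norm w)\<^sup>2 + (norm v)\<^sup>2)" using K(2) by blast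
    then show "\<bar>a w v\<bar> \<le> K * (1 + (norm v)\<^sup>2 + (norm w)\<^sup>2)" by (simp add: algebra_simps)
  qed (use K in auto)
qed

context prm2 begin

lemma kappa_nn: "0 \<le> kappa nt TYPE('n)"
  by (cases nt) (auto simp: kappa_def)

lemma D_bound:
  assumes "dens g" and lam: "0 \<le> lam"
  shows "1/2 * ((\<Sum>i\<in>UNIV. dens.I g (aa i)) + (\<Sum>i\<in>UNIV. dens.I g (qq i)))
           - (\<Sum>i\<in>UNIV. dens.mm g i * dens.I g (ee i))
         \<le> (lam\<^sup>2 + 2 * sig\<^sup>2 * kappa nt TYPE('n) - lam / Cb) * (1/2 * dens.I g (\<lambda>v w. \<Sum>i\<in>UNIV. (v$i - dens.mm g i)\<^sup>2))"
proof -
  interpret dens g by fact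
  define A where "A = (\<lambda>(v::real^'n) (w::real^'n). \<Sum>i\<in>UNIV. (v$i - mm i)\<^sup>2)"
  define B where "B = (\<lambda>(v::real^'n) (w::real^'n). \<Sum>i\<in>UNIV. (w$i - mm i)\<^sup>2)"
  define X where "X = (\<lambda>(v::real^'n) (w::real^'n). \<Sum>i\<in>UNIV. (v$i - mm i) * (w$i - mm i))"
  define N where "N = (\<lambda>(v::real^'n) (w::real^'n). \<Sum>i\<in>UNIV. (w$i - v$i)\<^sup>2)"
  define Pf where "Pf = (\<lambda>(v::real^'n) (w::real^'n). \<Sum>i\<in>UNIV. (v$i - mm i) * (w$i - v$i))"
  define c where "c = (lam\<^sup>2 + sig\<^sup>2 * kappa nt TYPE('n)) / 2"
  define \<rho> where "\<rho> = (Cb - 1) / (2 * (Cb + 1))"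
  define G where "G = (\<lambda>v w. \<Sum>i\<in>UNIV. 1/2 * aa i v w + 1/2 * qq i v w + (- mm i) * ee i v w)"
  define H where "H = (\<lambda>v w. (lam*(\<rho> - 1/2) + c) * (A v w + B v w) + (lam - 2*c) * X v w)"
  have c_nn: "0 \<le> c" unfolding c_def using kappa_nn by simp
  have gA: "good A" unfolding A_def by (intro good_sum good_sq lin_fst_c)
  have gB: "good B" unfolding B_def by (intro good_sum good_sq lin_snd_c)
  have gX: "good X" unfolding X_def by (intro good_sum good_mult_lin lin_fst_c lin_snd_c)
  have gG: "good G" unfolding G_def by (intro good_sum good_add good_cmult good_aa good_qq good_ee)
  have gH: "good H" unfolding H_def by (intro good_add good_cmult gA gB gX)
  have PA: "Pf v w = X v w - A v w" for v w
    unfolding Pf_def X_def A_def sum_subtractf[symmetric]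
    by (rule sum.cong[OF refl]) (simp add: power2_eq_square algebra_simps)
  have PB: "Pf w v = X v w - B v w" for v w
    unfolding Pf_def X_def B_def sum_subtractf[symmetric]
    by (rule sum.cong[OF refl]) (simp add: power2_eq_square algebra_simps)
  have NA: "N v w = A v w + B v w - 2 * X v w" for v w
    unfolding N_def X_def A_def B_def sum_subtractf[symmetric] sum.distrib[symmetric] sum_distrib_left
    by (rule sum.cong[OF refl]) (simp add: power2_eq_square algebra_simps)
  have Nsym: "N w v = N v w" for v w
    unfolding N_def by (rule sum.cong[OF refl]) (simp add: power2_eq_square algebra_simps)
  have Gc: "G v w = lam * gam v w * Pf v w + c * (gam v w)\<^sup>2 * N v w" for v w
  proof -
    have "G v w = (\<Sum>i\<in>UNIV. lam * gam v w * ((v$i - mm i) * (w$i - v$i)) + (lam\<^sup>2/2 * (gam v w)\<^sup>2) * (w$i - v$i)\<^sup>2 + sig\<^sup>2/2 * (dd i v w)\<^sup>2)"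
      unfolding G_def
      by (rule sum.cong[OF refl]) (simp add: aa_def qq_def ee_def power2_eq_square algebra_simps)
    also have "\<dots> = lam * gam v w * Pf v w + (lam\<^sup>2/2 * (gam v w)\<^sup>2) * N v w + sig\<^sup>2/2 * (\<Sum>i\<in>UNIV. (dd i v w)\<^sup>2)"
      unfolding Pf_def N_def by (simp add: sum.distrib sum_distrib_left)
    also have "\<dots> = lam * gam v w * Pf v w + c * (gam v w)\<^sup>2 * N v w"
      unfolding dd_sq N_def c_def by (simp add: algebra_simps)
    finally show ?thesis .
  qed
  have ineq: "G v w + G w v \<le> H v w" for v w
  proof -
    have A0: "0 \<le> A v w" unfolding A_def by (intro sum_nonneg) auto
    have B0: "0 \<le> B v w" unfolding B_def by (intro sum_nonneg) auto
    have N0: "0 \<le> A v w + B v w - 2 * X v w" unfolding NA[symmetric] N_def by (intro sum_nonneg) auto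
    have "G v w + G w v = (lam * gam v w * (X v w - A v w) + c * (gam v w)\<^sup>2 * (A v w + B v w - 2 * X v w))
       + (lam * (1 - gam v w) * (X v w - B v w) + c * (1 - gam v w)\<^sup>2 * (A v w + B v w - 2 * X v w))"
      by (simp only: Gc PB[where v=v and w=w] PA[where v=v and w=w] gam_sym[where v=v and w=w] Nsym[where v=v and w=w] NA[where v=v and w=w])
    also have "\<dots> \<le> H v w" unfolding H_def
      by (rule key_ineq[OF A0 B0 N0 gam_01 _ lam c_nn]) (unfold \<rho>_def, rule gam_half)
    finally show ?thesis .
  qed
  have IG: "I G = 1/2 * ((\<Sum>i\<in>UNIV. I (aa i)) + (\<Sum>i\<in>UNIV. I (qq i))) - (\<Sum>i\<in>UNIV. mm i * I (ee i))"
  proof -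
    have "I G = (\<Sum>i\<in>UNIV. 1/2 * I (aa i) + 1/2 * I (qq i) + (- mm i) * I (ee i))"
      unfolding G_def
    proof (subst I_sum)
      show "\<And>i. i \<in> UNIV \<Longrightarrow> good (\<lambda>v w. 1/2 * aa i v w + 1/2 * qq i v w + (- mm i) * ee i v w)"
        by (intro good_add good_cmult good_aa good_qq good_ee)
      show "(\<Sum>i\<in>UNIV. I (\<lambda>v w. 1/2 * aa i v w + 1/2 * qq i v w + (- mm i) * ee i v w)) =
         (\<Sum>i\<in>UNIV. 1/2 * I (aa i) + 1/2 * I (qq i) + (- mm i) * I (ee i))"
      proof (rule sum.cong[OF refl])
        fix i :: 'n
        have "I (\<lambda>v w. 1/2 * aa i v w + 1/2 * qq i v w + (- mm i) * ee i v w) =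
           I (\<lambda>v w. 1/2 * aa i v w) + I (\<lambda>v w. 1/2 * qq i v w) + I (\<lambda>v w. (- mm i) * ee i v w)"
          by (rule I_add3) (intro good_cmult good_aa good_qq good_ee)+
        then show "I (\<lambda>v w. 1/2 * aa i v w + 1/2 * qq i v w + (- mm i) * ee i v w) =
           1/2 * I (aa i) + 1/2 * I (qq i) + (- mm i) * I (ee i)"
          by (simp only: I_cmult)
      qed
    qed
    also have "\<dots> = 1/2 * ((\<Sum>i\<in>UNIV. I (aa i)) + (\<Sum>i\<in>UNIV. I (qq i))) - (\<Sum>i\<in>UNIV. mm i * I (ee i))"
      by (simp only: sum.distrib sum_distrib_left[symmetric] mult_minus_left sum_negf) (simp add: algebra_simps)
    finally show ?thesis .
  qed
  have sw: "I (\<lambda>v w. G w v) = I G" by (rule I_swap[OF gG])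
  have "I G + I G = I (\<lambda>v w. G v w + G w v)"
    using I_add[OF gG good_swap[OF gG]] sw by simp
  also have "\<dots> \<le> I H" by (rule I_mono[OF good_add[OF gG good_swap[OF gG]] gH ineq])
  also have "I H = (lam*(\<rho> - 1/2) + c) * (I A + I B) + (lam - 2*c) * I X"
    unfolding H_def by (simp add: I_add I_cmult good_add good_cmult gA gB gX)
  also have "I B = I A" unfolding A_def B_def by (rule I_swap[OF gA[unfolded A_def]])
  also have "I X = 0"
  proof -
    have "I X = (\<Sum>i\<in>UNIV. I (\<lambda>v w. (v$i - mm i) * (w$i - mm i)))"
      unfolding X_def by (rule I_sum) (intro good_mult_lin lin_fst_c lin_snd_c)
    also have "\<dots> = 0" by (simp add: I_sep centered)
    finally show ?thesis .
  qed
  finally have IGb: "I G \<le> (lam*(\<rho> - 1/2) + c) * I A" by simp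
  have IA0: "0 \<le> I A" using I_mono[OF good_zero gA] I_zero unfolding A_def by (simp add: sum_nonneg)
  have Cb1: "1 \<le> Cb" by (rule Cb_ge1)
  have k: "lam*(\<rho> - 1/2) + c \<le> (lam\<^sup>2 + 2 * sig\<^sup>2 * kappa nt TYPE('n) - lam / Cb) * (1/2)"
  proof -
    have r: "\<rho> - 1/2 = - (1 / (Cb + 1))" unfolding \<rho>_def using Cb1 by (simp add: field_simps)
    have "1 / Cb \<le> 2 / (Cb + 1)" using Cb1 by (simp add: field_simps)
    then have "lam * (1 / Cb) \<le> lam * (2 / (Cb + 1))" using lam by (rule mult_left_mono)
    then have pq: "lam / Cb \<le> 2 * (lam / (Cb + 1))" by (simp add: mult.commute)
    have s: "0 \<le> sig\<^sup>2 * kappa nt TYPE('n)" using kappa_nn by simp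
    have e1: "(lam\<^sup>2 + 2 * sig\<^sup>2 * kappa nt TYPE('n) - lam / Cb) * (1/2)
        = lam\<^sup>2/2 + sig\<^sup>2 * kappa nt TYPE('n) - (lam / Cb)/2" by (simp add: field_simps)
    have e2: "lam*(\<rho> - 1/2) + c = - (lam / (Cb + 1)) + lam\<^sup>2/2 + (sig\<^sup>2 * kappa nt TYPE('n))/2"
      unfolding r c_def by (simp add: field_simps)
    have gen: "\<And>p q a s. p \<le> 2*q \<Longrightarrow> 0 \<le> s \<Longrightarrow> -q + a/2 + s/2 \<le> a/2 + s - p/(2::real)" by linarith
    show ?thesis unfolding e1 e2 by (rule gen[OF pq s])
  qed
  have "I G \<le> ((lam\<^sup>2 + 2 * sig\<^sup>2 * kappa nt TYPE('n) - lam / Cb) * (1/2)) * I A"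
    using IGb mult_right_mono[OF k IA0] by linarith
  then show ?thesis unfolding IG A_def by (simp add: mult_ac)
qed

end

lemma exp_decay: "0 < (r::real) \<Longrightarrow> ((\<lambda>t. exp (- r * t)) \<longlongrightarrow> 0) at_top"
proof -
  assume r: "0 < r"
  have "filterlim (\<lambda>t. r * t) at_top at_top"
    by (rule filterlim_tendsto_pos_mult_at_top[where c=r and f="\<lambda>_. r"]) (auto simp: r filterlim_ident)
  then have "filterlim (\<lambda>t. - (r * t)) at_bot at_top"
    by (subst filterlim_uminus_at_bot) simp
  then have "((\<lambda>t. exp (- (r * t))) \<longlongrightarrow> 0) at_top"
    by (rule filterlim_compose[OF exp_at_bot])
  then show ?thesis by simp
qed

lemma gronwall:
  fixes V D :: "real \<Rightarrow> real"
  assumes der: "\<And>s. 0 \<le> s \<Longrightarrow> (V has_real_derivative D s) (at s within {0..})"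
    and bd: "\<And>s. 0 \<le> s \<Longrightarrow> D s \<le> - r * V s" and t: "0 < t"
  shows "V t \<le> V 0 * exp (- r * t)"
proof -
  define W where "W s = V s * exp (r * s)" for s
  have dW: "(W has_real_derivative (D s * exp (r * s) + V s * (r * exp (r * s)))) (at s within {0..})"
    if "0 \<le> s" for s
    unfolding W_def[abs_def]
    by (rule derivative_eq_intros der[OF that] refl | simp)+
  have "W t \<le> W 0"
  proof (rule DERIV_nonpos_imp_decreasing_open[of 0 t W])
    show "0 \<le> t" using t by simp
    fix x assume x: "0 < x" "x < t"
    have "(W has_real_derivative (D x * exp (r * x) + V x * (r * exp (r * x)))) (at x within {0<..})"
      by (rule DERIV_subset[OF dW]) (use x in auto)
    then have "(W has_real_derivative (D x * exp (r * x) + V x * (r * exp (r * x)))) (at x)"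
      using at_within_open[of x "{0<..}"] x by simp
    moreover have "D x * exp (r * x) + V x * (r * exp (r * x)) \<le> 0"
    proof -
      have "D x * exp (r * x) + V x * (r * exp (r * x)) = (D x + r * V x) * exp (r * x)"
        by (simp add: algebra_simps)
      moreover have "D x + r * V x \<le> 0" using bd[of x] x by simp
      ultimately show ?thesis by (simp add: mult_nonpos_nonneg)
    qed
    ultimately show "\<exists>y. (W has_real_derivative y) (at x) \<and> y \<le> 0" by blast
  next
    show "continuous_on {0..t} W"
      unfolding continuous_on_eq_continuous_within
    proof
      fix x assume x: "x \<in> {0..t}"
      have "continuous (at x within {0..}) W" by (rule DERIV_continuous[OF dW]) (use x in auto)
      then show "continuous (at x within {0..t}) W" by (rule continuous_within_subset) auto
    qed
  qed
  then have Wt: "V t * exp (r * t) \<le> V 0" unfolding W_def by simp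
  have "V t = V t * exp (r * t) * exp (- r * t)" by (simp add: mult.assoc flip: exp_add)
  also have "\<dots> \<le> V 0 * exp (- r * t)" by (rule mult_right_mono[OF Wt]) simp
  finally show ?thesis .
qed


theorem proposition1:
  fixes E :: "real^'n \<Rightarrow> real"
    and lam sig :: real
    and nt :: noise
    and P :: "'w measure"
    and Xi :: "'w \<Rightarrow> real^'n"
  assumes "continuous_on UNIV E"
    and "\<forall>v. 0 < E v"
    and "bdd_above (range E)"
    and "bdd_below (range E)"
    and "0 \<le> lam"
    and "0 \<le> sig"
    and "iid_noise P Xi"
  shows "\<exists>\<beta>0. \<forall>\<beta>. \<beta> > 0 \<and> \<beta> \<ge> \<beta>0 \<longrightarrow>
           (\<forall>f :: real^'n \<Rightarrow> real \<Rightarrow> real.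
              boltzmann_solution nt \<beta> lam sig E P Xi f \<longrightarrow>
              (\<forall>t>0. Var f t \<le> Var f 0 *
                 exp (- (lam / C_beta \<beta> E - lam\<^sup>2 - 2 * sig\<^sup>2 * kappa nt TYPE('n)) * t)) \<and>
              (sig\<^sup>2 < lam / (2 * kappa nt TYPE('n)) * (1 / C_beta \<beta> E - lam) \<longrightarrow>
                 (Var f \<longlongrightarrow> 0) at_top))"
proof (rule exI[of _ 0], rule allI, rule impI)
  fix \<beta> :: real assume hb: "\<beta> > 0 \<and> \<beta> \<ge> 0"
  interpret prm2 E \<beta> nt lam sig
    by unfold_locales (use assms hb in auto)
  show "\<forall>f :: real^'n \<Rightarrow> real \<Rightarrow> real.
              boltzmann_solution nt \<beta> lam sig E P Xi f \<longrightarrow>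
              (\<forall>t>0. Var f t \<le> Var f 0 *
                 exp (- (lam / C_beta \<beta> E - lam\<^sup>2 - 2 * sig\<^sup>2 * kappa nt TYPE('n)) * t)) \<and>
              (sig\<^sup>2 < lam / (2 * kappa nt TYPE('n)) * (1 / C_beta \<beta> E - lam) \<longrightarrow>
                 (Var f \<longlongrightarrow> 0) at_top)"
  proof (intro allI impI)
    fix f :: "real^'n \<Rightarrow> real \<Rightarrow> real"
    assume sol: "boltzmann_solution nt \<beta> lam sig E P Xi f"
    have S1: "dens (\<lambda>v. f v t)" if "0 \<le> t" for t
      using sol that unfolding boltzmann_solution_def dens_def by auto
    have S2: "((\<lambda>s. \<integral>v. v $ i * f v s \<partial>lborel) has_real_derivative
           coll nt \<beta> lam sig E P Xi f (\<lambda>v. v $ i) t) (at t within {0..})" if "0 \<le> t" for t i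
      using sol that unfolding boltzmann_solution_def by auto
    have S3: "((\<lambda>s. \<integral>v. (norm v)\<^sup>2 * f v s \<partial>lborel) has_real_derivative
           coll nt \<beta> lam sig E P Xi f (\<lambda>v. (norm v)\<^sup>2) t) (at t within {0..})" if "0 \<le> t" for t
      using sol that unfolding boltzmann_solution_def by auto
    have fnn: "0 \<le> f v t" if "0 \<le> t" for v t
      using sol that unfolding boltzmann_solution_def by auto
    define r where "r = lam / C_beta \<beta> E - lam\<^sup>2 - 2 * sig\<^sup>2 * kappa nt TYPE('n)"
    define Mi where "Mi i s = (\<integral>v. v $ i * f v s \<partial>lborel)" for i s
    define M2f where "M2f s = (\<integral>v. (norm v)\<^sup>2 * f v s \<partial>lborel)" for s
    define Vf where "Vf s = 1/2 * (M2f s - (\<Sum>i\<in>UNIV. (Mi i s)\<^sup>2))" for s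
    define Dv where "Dv s = 1/2 * coll nt \<beta> lam sig E P Xi f (\<lambda>v. (norm v)\<^sup>2) s
        - (\<Sum>i\<in>UNIV. Mi i s * coll nt \<beta> lam sig E P Xi f (\<lambda>v. v $ i) s)" for s
    have VI: "1/2 * dens.I (\<lambda>v. f v s) (\<lambda>v w. \<Sum>i\<in>UNIV. (v$i - dens.mm (\<lambda>v. f v s) i)\<^sup>2) = Vf s"
      if "0 \<le> s" for s
    proof -
      interpret dens "\<lambda>v. f v s" using S1[OF that] .
      show ?thesis by (simp only: I_A) (simp add: Vf_def M2f_def Mi_def M2_def mm_def)
    qed
    have VarV: "Var f s = Vf s" if "0 \<le> s" for s
    proof -
      interpret dens "\<lambda>v. f v s" using S1[OF that] .
      have "Var f s = 1/2 * I (\<lambda>v w. \<Sum>i\<in>UNIV. (v$i - mm i)\<^sup>2)"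
        unfolding Var_def mean_def using var_I by simp
      then show ?thesis using VI[OF that] by simp
    qed
    have der: "(Vf has_real_derivative Dv s) (at s within {0..})" if "0 \<le> s" for s
    proof -
      have d2: "(M2f has_real_derivative coll nt \<beta> lam sig E P Xi f (\<lambda>v. (norm v)\<^sup>2) s) (at s within {0..})"
        using S3[OF that] unfolding M2f_def[abs_def] .
      have dsq: "((\<lambda>s. (Mi i s)\<^sup>2) has_real_derivative 2 * (Mi i s * coll nt \<beta> lam sig E P Xi f (\<lambda>v. v $ i) s)) (at s within {0..})" for i
      proof (rule DERIV_cong)
        show "((\<lambda>s. (Mi i s)\<^sup>2) has_real_derivative of_nat 2 * (coll nt \<beta> lam sig E P Xi f (\<lambda>v. v $ i) s * (Mi i s) ^ (2 - Suc 0))) (at s within {0..})"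
          by (rule DERIV_power) (use S2[OF that, of i] in \<open>simp add: Mi_def[abs_def]\<close>)
      qed (simp add: mult_ac)
      have "(Vf has_real_derivative 1/2 * (coll nt \<beta> lam sig E P Xi f (\<lambda>v. (norm v)\<^sup>2) s
           - (\<Sum>i\<in>UNIV. 2 * (Mi i s * coll nt \<beta> lam sig E P Xi f (\<lambda>v. v $ i) s)))) (at s within {0..})"
        unfolding Vf_def[abs_def] by (intro DERIV_cmult DERIV_diff d2 DERIV_sum dsq)
      then show ?thesis
        by (rule DERIV_cong) (simp add: Dv_def sum_distrib_left[symmetric])
    qed
    have bnd: "Dv s \<le> - r * Vf s" if "0 \<le> s" for s
    proof -
      interpret dens "\<lambda>v. f v s" using S1[OF that] .
      have c1: "coll nt \<beta> lam sig E P Xi f (\<lambda>v. v $ i) s = I (ee i)" for i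
        unfolding coll_def using coll_i[OF S1[OF that] assms(7), of i] by simp
      have c2: "coll nt \<beta> lam sig E P Xi f (\<lambda>v. (norm v)\<^sup>2) s = (\<Sum>i\<in>UNIV. I (aa i)) + (\<Sum>i\<in>UNIV. I (qq i))"
        unfolding coll_def using coll_2[OF S1[OF that] assms(7)] by simp
      have mi: "Mi i s = mm i" for i unfolding Mi_def mm_def ..
      have "Dv s = 1/2 * ((\<Sum>i\<in>UNIV. I (aa i)) + (\<Sum>i\<in>UNIV. I (qq i))) - (\<Sum>i\<in>UNIV. mm i * I (ee i))"
        unfolding Dv_def c1 c2 mi ..
      also have "\<dots> \<le> (lam\<^sup>2 + 2 * sig\<^sup>2 * kappa nt TYPE('n) - lam / Cb) * (1/2 * I (\<lambda>v w. \<Sum>i\<in>UNIV. (v$i - mm i)\<^sup>2))"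
        by (rule D_bound[OF S1[OF that] assms(5)])
      also have "\<dots> = - r * Vf s" using VI[OF that] by (simp add: r_def)
      finally show ?thesis .
    qed
    have main: "Var f t \<le> Var f 0 * exp (- r * t)" if "t > 0" for t
      using gronwall[OF der bnd that] VarV[of t] VarV[of 0] that by simp
    show "(\<forall>t>0. Var f t \<le> Var f 0 *
                 exp (- (lam / C_beta \<beta> E - lam\<^sup>2 - 2 * sig\<^sup>2 * kappa nt TYPE('n)) * t)) \<and>
              (sig\<^sup>2 < lam / (2 * kappa nt TYPE('n)) * (1 / C_beta \<beta> E - lam) \<longrightarrow>
                 (Var f \<longlongrightarrow> 0) at_top)"
    proof (intro conjI allI impI)
      fix t :: real assume "t > 0"
      then show "Var f t \<le> Var f 0 * exp (- (lam / C_beta \<beta> E - lam\<^sup>2 - 2 * sig\<^sup>2 * kappa nt TYPE('n)) * t)"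
        using main unfolding r_def by simp
    next
      assume cond: "sig\<^sup>2 < lam / (2 * kappa nt TYPE('n)) * (1 / C_beta \<beta> E - lam)"
      have kp: "0 < kappa nt TYPE('n)" by (cases nt) (auto simp: kappa_def)
      have "sig\<^sup>2 * (2 * kappa nt TYPE('n)) < lam / (2 * kappa nt TYPE('n)) * (1 / C_beta \<beta> E - lam) * (2 * kappa nt TYPE('n))"
        using cond kp by (intro mult_strict_right_mono) auto
      also have "\<dots> = lam / C_beta \<beta> E - lam\<^sup>2" using kp by (simp add: field_simps power2_eq_square)
      finally have rpos: "0 < r" unfolding r_def by (simp add: algebra_simps)
      have Vnn: "0 \<le> Var f t" if "0 \<le> t" for t
        unfolding Var_def using fnn[OF that] by (auto intro!: integral_nonneg_AE)
      show "(Var f \<longlongrightarrow> 0) at_top"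
      proof (rule tendsto_sandwich[of "\<lambda>_. 0" _ _ "\<lambda>t. Var f 0 * exp (- r * t)"])
        show "\<forall>\<^sub>F t in at_top. 0 \<le> Var f t"
          using Vnn by (intro eventually_at_top_linorderI[of 0]) auto
        show "\<forall>\<^sub>F t in at_top. Var f t \<le> Var f 0 * exp (- r * t)"
          using main by (intro eventually_at_top_linorderI[of 1]) auto
        show "((\<lambda>_. 0) \<longlongrightarrow> (0::real)) at_top" by simp
        show "((\<lambda>t. Var f 0 * exp (- r * t)) \<longlongrightarrow> 0) at_top"
          using tendsto_mult[OF tendsto_const exp_decay[OF rpos], of "Var f 0"] by simp
      qed
    qed
  qed
qed


end
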